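(* With the notation of the context, let $\beta^*=\inf_{x\in\Delta}F(x)$. Then there exists $x^*\in\Delta$ with $F(x^* )=\beta^*$.
   Context: Fix an integer $n\ge2$ and free generators $\xi_1,\dots,\xi_n$ of a free group; throughout $i,j,k\in\{1,\dots,n\}$ and $t,s,p\in\{-1,+1\}$. Let $\Psi$ be the set of reduced words $\xi_i^{2t}$; $\xi_i^t\xi_j^{2s}$ ($i\ne j$); $\xi_i^t\xi_j^s\xi_k^p$ ($i\ne j$, $j\ne k$). For a letter $\xi_a^x$ let $S(\xi_a^x)\subset\Psi$ be the set of words in $\Psi$ beginning with $\xi_a^x$, namely $\{\xi_a^{2x}\}\cup\{\xi_a^x\xi_j^{2s}\}\cup\{\xi_a^x\xi_j^s\xi_k^p\}$; for $a\ne b$ let $S(\xi_a^x\xi_b^y)=\{\xi_a^x\xi_b^{2y}\}\cup\{\xi_a^x\xi_b^y\xi_k^p: k\ne b\}$. A relation $r$ is a pair $(\psi_r,\Psi_r)$ with $\psi_r\in\Psi$, $\Psi_r\subseteq\Psi$. Let $\mathcal{F}$ be the collection of the following relations (indices $i_0\ne j_0$, in type 5a $i_0,j_0,k_0$ pairwise distinct, all signs arbitrary): 1a: $\psi_r=\xi_{i_0}^{2t_0}$, $\Psi_r=\Psi\setminus S(\xi_{i_0}^{t_0})$; 2b: $\psi_r=\xi_{i_0}^{t_0}\xi_{j_0}^{2s_0}$, $\Psi_r=\Psi\setminus S(\xi_{i_0}^{t_0}\xi_{j_0}^{s_0})$; 3a: $\psi_r=\xi_{i_0}^{t_0}\xi_{j_0}^{s_0}\xi_{i_0}^{t_0}$,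 $\Psi_r=\Psi\setminus S(\xi_{j_0}^{s_0}\xi_{i_0}^{t_0})$; 4b: $\psi_r=\xi_{i_0}^{t_0}\xi_{j_0}^{s_0}\xi_{i_0}^{-t_0}$, $\Psi_r=S(\xi_{i_0}^{t_0})$; 5a: $\psi_r=\xi_{i_0}^{t_0}\xi_{j_0}^{s_0}\xi_{k_0}^{p_0}$, $\Psi_r=\Psi\setminus S(\xi_{j_0}^{s_0}\xi_{k_0}^{p_0})$. Let $\Delta=\{x\in\mathbb{R}^\Psi: x(\psi)>0\ \forall\psi,\ \sum_{\psi}x(\psi)=1\}$. For a relation $r$ and $x\in\Delta$ put $x_r=x(\psi_r)$, $X_r=\sum_{\psi\in\Psi_r}x(\psi)$, $f_r(x)=\frac{1-x_r}{x_r}\cdot\frac{1-X_r}{X_r}$, and $F(x)=\max_{r\in\mathcal{F}}f_r(x)$. *)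

theory Defs
  imports Complex_Main
begin

text \<open>A letter xi_i^t is encoded as the pair (i, t) with i in {1..n}, t in {-1, 1};
  a word is the list of its letters (so xi_i^{2t} = [(i,t),(i,t)]).\<close>

type_synonym letter = "nat \<times> int"
type_synonym word = "letter list"

definition Idx :: "nat \<Rightarrow> nat set" where "Idx n = {1..n}"
definition Sgn :: "int set" where "Sgn = {-1, 1}"

definition Psi :: "nat \<Rightarrow> word set" where
  "Psi n =
     {[(i,t),(i,t)] | i t. i \<in> Idx n \<and> t \<in> Sgn}
   \<union> {[(i,t),(j,s),(j,s)] | i j t s. i \<in> Idx n \<and> j \<in> Idx n \<and> t \<in> Sgn \<and> s \<in> Sgn \<and> i \<noteq> j}
   \<union> {[(i,t),(j,s),(k,p)] | i j k t s p. i \<in> Idx n \<and> j \<in> Idx n \<and> k \<in> Idx n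
        \<and> t \<in> Sgn \<and> s \<in> Sgn \<and> p \<in> Sgn \<and> i \<noteq> j \<and> j \<noteq> k}"

definition S1 :: "nat \<Rightarrow> letter \<Rightarrow> word set" where
  "S1 n l = {[l,l]}
     \<union> {[l,(j,s),(j,s)] | j s. j \<in> Idx n \<and> s \<in> Sgn \<and> j \<noteq> fst l}
     \<union> {[l,(j,s),(k,p)] | j s k p. j \<in> Idx n \<and> k \<in> Idx n \<and> s \<in> Sgn \<and> p \<in> Sgn
          \<and> j \<noteq> fst l \<and> k \<noteq> j}"

definition S2 :: "nat \<Rightarrow> letter \<Rightarrow> letter \<Rightarrow> word set" where
  "S2 n l m = {[l,m,m]} \<union> {[l,m,(k,p)] | k p. k \<in> Idx n \<and> p \<in> Sgn \<and> k \<noteq> fst m}"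

text \<open>The family of relations; a relation is a pair (psi_r, Psi_r).\<close>
definition Fam :: "nat \<Rightarrow> (word \<times> word set) set" where
  "Fam n =
     {([(i,t),(i,t)], Psi n - S1 n (i,t)) | i t. i \<in> Idx n \<and> t \<in> Sgn}
   \<union> {([(i,t),(j,s),(j,s)], Psi n - S2 n (i,t) (j,s)) | i j t s.
        i \<in> Idx n \<and> j \<in> Idx n \<and> t \<in> Sgn \<and> s \<in> Sgn \<and> i \<noteq> j}
   \<union> {([(i,t),(j,s),(i,t)], Psi n - S2 n (j,s) (i,t)) | i j t s.
        i \<in> Idx n \<and> j \<in> Idx n \<and> t \<in> Sgn \<and> s \<in> Sgn \<and> i \<noteq> j}
   \<union> {([(i,t),(j,s),(i,-t)], S1 n (i,t)) | i j t s.
        i \<in> Idx n \<and> j \<in> Idx n \<and> t \<in> Sgn \<and> s \<in> Sgn \<and> i \<noteq> j}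
   \<union> {([(i,t),(j,s),(k,p)], Psi n - S2 n (j,s) (k,p)) | i j k t s p.
        i \<in> Idx n \<and> j \<in> Idx n \<and> k \<in> Idx n \<and> t \<in> Sgn \<and> s \<in> Sgn \<and> p \<in> Sgn
        \<and> i \<noteq> j \<and> j \<noteq> k \<and> i \<noteq> k}"

definition Delta :: "nat \<Rightarrow> (word \<Rightarrow> real) set" where
  "Delta n = {x. (\<forall>\<psi>\<in>Psi n. x \<psi> > 0) \<and> (\<forall>\<psi>. \<psi> \<notin> Psi n \<longrightarrow> x \<psi> = 0)
               \<and> (\<Sum>\<psi>\<in>Psi n. x \<psi>) = 1}"

definition frel :: "word \<times> word set \<Rightarrow> (word \<Rightarrow> real) \<Rightarrow> real" where
  "frel r x = (let xr = x (fst r); Xr = (\<Sum>\<psi>\<in>snd r. x \<psi>)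
               in ((1 - xr) / xr) * ((1 - Xr) / Xr))"

definition FF :: "nat \<Rightarrow> (word \<Rightarrow> real) \<Rightarrow> real" where
  "FF n x = Max ((\<lambda>r. frel r x) ` Fam n)"

end

theory Submission imports Defs "HOL-Analysis.Analysis" begin

lemma S1_sub: "fst l \<in> Idx n \<Longrightarrow> snd l \<in> Sgn \<Longrightarrow> S1 n l \<subseteq> Psi n"
  by (cases l) (auto simp: S1_def Psi_def)

lemma S2_sub: "fst l \<in> Idx n \<Longrightarrow> snd l \<in> Sgn \<Longrightarrow> fst m \<in> Idx n \<Longrightarrow> snd m \<in> Sgn \<Longrightarrow> fst l \<noteq> fst m \<Longrightarrow> S2 n l m \<subseteq> Psi n"
  by (cases l; cases m) (auto simp: S2_def Psi_def)

lemma hd_S1: "w \<in> S1 n l \<Longrightarrow> hd w = l"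
  by (auto simp: S1_def)

lemma hd_S2: "w \<in> S2 n l m \<Longrightarrow> hd w = l"
  by (auto simp: S2_def)

lemma other_idx: assumes "n \<ge> 2" "i \<in> Idx n" shows "\<exists>j\<in>Idx n. j \<noteq> i"
proof (cases "i = 1")
  case True then show ?thesis using assms by (intro bexI[of _ 2]) (auto simp: Idx_def)
next
  case False then show ?thesis using assms by (intro bexI[of _ 1]) (auto simp: Idx_def)
qed

lemma Sgn_neg[simp]: "t \<in> Sgn \<Longrightarrow> - t \<in> Sgn" by (auto simp: Sgn_def)
lemma one_Sgn[simp]: "1 \<in> Sgn" by (auto simp: Sgn_def)

lemma Fam_props:
  assumes "n \<ge> 2" "r \<in> Fam n"
  shows "fst r \<in> Psi n" "snd r \<subseteq> Psi n" "snd r \<noteq> {}"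
proof -
  have "fst r \<in> Psi n \<and> snd r \<subseteq> Psi n \<and> snd r \<noteq> {}"
    using assms(2) unfolding Fam_def
  proof (elim UnE CollectE exE conjE)
    fix i t assume r: "r = ([(i, t), (i, t)], Psi n - S1 n (i, t))" and it: "i \<in> Idx n" "t \<in> Sgn"
    obtain j where j: "j \<in> Idx n" "j \<noteq> i" using other_idx[OF assms(1) it(1)] by blast
    have "[(j,t),(j,t)] \<in> Psi n - S1 n (i, t)" using it j hd_S1[of "[(j,t),(j,t)]" n "(i,t)"]
      by (auto simp: Psi_def)
    moreover have "[(i,t),(i,t)] \<in> Psi n" using it by (auto simp: Psi_def)
    ultimately show ?thesis using r by auto
  next
    fix i j t s assume r: "r = ([(i, t), (j, s), (j, s)], Psi n - S2 n (i, t) (j, s))" and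
      h: "i \<in> Idx n" "j \<in> Idx n" "t \<in> Sgn" "s \<in> Sgn" "i \<noteq> j"
    have "[(j,s),(j,s)] \<in> Psi n - S2 n (i, t) (j, s)" using h hd_S2[of "[(j,s),(j,s)]" n "(i,t)"]
      by (auto simp: Psi_def)
    moreover have "fst r \<in> Psi n" using h r by (auto simp: Psi_def)
    ultimately show ?thesis using r by auto
  next
    fix i j t s assume r: "r = ([(i, t), (j, s), (i, t)], Psi n - S2 n (j, s) (i, t))" and
      h: "i \<in> Idx n" "j \<in> Idx n" "t \<in> Sgn" "s \<in> Sgn" "i \<noteq> j"
    have "[(i,t),(i,t)] \<in> Psi n - S2 n (j, s) (i, t)" using h hd_S2[of "[(i,t),(i,t)]" n "(j,s)"]
      by (auto simp: Psi_def)
    moreover have "fst r \<in> Psi n" using h r by (auto simp: Psi_def)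
    ultimately show ?thesis using r by auto
  next
    fix i j t s assume r: "r = ([(i, t), (j, s), (i, -t)], S1 n (i, t))" and
      h: "i \<in> Idx n" "j \<in> Idx n" "t \<in> Sgn" "s \<in> Sgn" "i \<noteq> j"
    have "[(i,t),(i,t)] \<in> S1 n (i, t)" by (auto simp: S1_def)
    moreover have "fst r \<in> Psi n" using h r by (auto simp: Psi_def)
    ultimately show ?thesis using r h S1_sub[of "(i,t)" n] by auto
  next
    fix i j k t s p assume r: "r = ([(i, t), (j, s), (k, p)], Psi n - S2 n (j, s) (k, p))" and
      h: "i \<in> Idx n" "j \<in> Idx n" "k \<in> Idx n" "t \<in> Sgn" "s \<in> Sgn" "p \<in> Sgn" "i \<noteq> j" "j \<noteq> k" "i \<noteq> k"
    have "[(i,t),(i,t)] \<in> Psi n - S2 n (j, s) (k, p)" using h hd_S2[of "[(i,t),(i,t)]" n "(j,s)"]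
      by (auto simp: Psi_def)
    moreover have "fst r \<in> Psi n" using h r by (auto simp: Psi_def)
    ultimately show ?thesis using r by auto
  qed
  then show "fst r \<in> Psi n" "snd r \<subseteq> Psi n" "snd r \<noteq> {}" by auto
qed

lemma finite_Psi: "finite (Psi n)"
proof -
  have "Psi n \<subseteq> {w. set w \<subseteq> Idx n \<times> Sgn \<and> length w \<le> 3}"
    by (auto simp: Psi_def)
  moreover have "finite {w. set w \<subseteq> Idx n \<times> Sgn \<and> length w \<le> 3}"
    by (rule finite_lists_length_le) (auto simp: Idx_def Sgn_def)
  ultimately show ?thesis by (rule finite_subset)
qed

lemma finite_Fam: assumes "n \<ge> 2" shows "finite (Fam n)"
proof -
  have "Fam n \<subseteq> Psi n \<times> Pow (Psi n)" using Fam_props[OF assms] by force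
  then show ?thesis using finite_Psi by (meson finite_Pow_iff finite_SigmaI finite_subset)
qed

lemma Fam_ne: assumes "n \<ge> 2" shows "Fam n \<noteq> {}"
proof -
  have "([(1,1),(1,1)], Psi n - S1 n (1,1)) \<in> Fam n" using assms
    unfolding Fam_def by (auto simp: Idx_def)
  then show ?thesis by auto
qed

lemma Psi_ne: assumes "n \<ge> 2" shows "Psi n \<noteq> {}"
proof -
  have "[(1,1),(1,1)] \<in> Psi n" using assms unfolding Psi_def by (auto simp: Idx_def)
  then show ?thesis by auto
qed


definition Gs :: "nat \<Rightarrow> real \<Rightarrow> (word \<Rightarrow> real) set" where
  "Gs n M = (\<Inter>\<psi>. {x. x \<psi> \<in> (if \<psi> \<in> Psi n then {0..1} else {0})})
     \<inter> {x. (\<Sum>\<psi>\<in>Psi n. x \<psi>) = 1}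
     \<inter> (\<Inter>r\<in>Fam n. {x. (1 - x (fst r)) * (1 - (\<Sum>\<psi>\<in>snd r. x \<psi>)) \<le> M * (x (fst r) * (\<Sum>\<psi>\<in>snd r. x \<psi>))})"

lemma zero_step:
  assumes n: "n \<ge> 2" and x: "x \<in> Gs n M" and r: "r \<in> Fam n" and z: "x (fst r) = 0"
  shows "\<forall>\<psi>\<in>Psi n - snd r. x \<psi> = 0"
proof -
  have nn: "\<And>\<psi>. x \<psi> \<ge> 0" using x unfolding Gs_def by (auto split: if_splits)
  have "(1 - x (fst r)) * (1 - (\<Sum>\<psi>\<in>snd r. x \<psi>)) \<le> M * (x (fst r) * (\<Sum>\<psi>\<in>snd r. x \<psi>))"
    using x r unfolding Gs_def by blast
  then have X: "(\<Sum>\<psi>\<in>snd r. x \<psi>) \<ge> 1" using z by simp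
  have s1: "(\<Sum>\<psi>\<in>Psi n. x \<psi>) = 1" using x unfolding Gs_def by blast
  have "(\<Sum>\<psi>\<in>Psi n. x \<psi>) = (\<Sum>\<psi>\<in>Psi n - snd r. x \<psi>) + (\<Sum>\<psi>\<in>snd r. x \<psi>)"
    using sum.subset_diff[OF Fam_props(2)[OF n r] finite_Psi] by simp
  then have "(\<Sum>\<psi>\<in>Psi n - snd r. x \<psi>) \<le> 0" using X s1 by simp
  moreover have "(\<Sum>\<psi>\<in>Psi n - snd r. x \<psi>) \<ge> 0" using nn by (simp add: sum_nonneg)
  ultimately have "(\<Sum>\<psi>\<in>Psi n - snd r. x \<psi>) = 0" by simp
  then show ?thesis using sum_nonneg_eq_0_iff[of "Psi n - snd r" x] nn finite_Psi by blast
qed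

lemma final_contra:
  assumes n: "n \<ge> 2" and x: "x \<in> Gs n M"
    and h: "i \<in> Idx n" "j \<in> Idx n" "t \<in> Sgn" "s \<in> Sgn" "i \<noteq> j"
    and z: "x [(i,t),(j,s),(i,-t)] = 0"
  shows False
proof -
  have r1: "([(i,t),(j,s),(i,-t)], S1 n (i,t)) \<in> Fam n" using h unfolding Fam_def by blast
  have Z1: "\<forall>\<psi>\<in>Psi n - S1 n (i,t). x \<psi> = 0" using zero_step[OF n x r1] z by simp
  have w: "[(j,s),(i,t),(j,-s)] \<in> Psi n - S1 n (i,t)"
    using h hd_S1[of "[(j,s),(i,t),(j,-s)]" n "(i,t)"] by (auto simp: Psi_def)
  have r2: "([(j,s),(i,t),(j,-s)], S1 n (j,s)) \<in> Fam n" using h unfolding Fam_def by blast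
  have Z2: "\<forall>\<psi>\<in>Psi n - S1 n (j,s). x \<psi> = 0" using zero_step[OF n x r2] Z1 w by simp
  have "\<forall>\<psi>\<in>Psi n. x \<psi> = 0"
  proof
    fix \<psi> assume p: "\<psi> \<in> Psi n"
    show "x \<psi> = 0"
    proof (cases "\<psi> \<in> S1 n (i,t)")
      case True
      then have "\<psi> \<notin> S1 n (j,s)" using hd_S1[of \<psi> n "(i,t)"] hd_S1[of \<psi> n "(j,s)"] h by auto
      then show ?thesis using Z2 p by blast
    next
      case False then show ?thesis using Z1 p by blast
    qed
  qed
  then have "(\<Sum>\<psi>\<in>Psi n. x \<psi>) = 0" by simp
  moreover have "(\<Sum>\<psi>\<in>Psi n. x \<psi>) = 1" using x unfolding Gs_def by blast
  ultimately show False by simp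
qed

lemma Gs_pos:
  assumes n: "n \<ge> 2" and x: "x \<in> Gs n M" and p: "\<psi>0 \<in> Psi n"
  shows "x \<psi>0 > 0"
proof (rule ccontr)
  assume "\<not> x \<psi>0 > 0"
  moreover have "x \<psi>0 \<in> (if \<psi>0 \<in> Psi n then {0..1} else {0})" using x unfolding Gs_def by blast
  then have "x \<psi>0 \<ge> 0" using p by simp
  ultimately have z: "x \<psi>0 = 0" by simp
  show False using p unfolding Psi_def
  proof (elim UnE CollectE exE conjE)
    fix i t assume e: "\<psi>0 = [(i, t), (i, t)]" and h: "i \<in> Idx n" "t \<in> Sgn"
    obtain j where j: "j \<in> Idx n" "j \<noteq> i" using other_idx[OF n h(1)] by blast
    have r: "([(i,t),(i,t)], Psi n - S1 n (i,t)) \<in> Fam n" using h unfolding Fam_def by blast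
    have Z: "\<forall>\<psi>\<in>Psi n - (Psi n - S1 n (i,t)). x \<psi> = 0" using zero_step[OF n x r] z e by simp
    have "[(i,t),(j,1),(i,-t)] \<in> Psi n" "[(i,t),(j,1),(i,-t)] \<in> S1 n (i,t)"
      using h j by (auto simp: Psi_def S1_def)
    then show False using final_contra[OF n x h(1) j(1) h(2) one_Sgn] j Z by auto
  next
    fix i j t s assume e: "\<psi>0 = [(i,t),(j,s),(j,s)]" and h: "i \<in> Idx n" "j \<in> Idx n" "t \<in> Sgn" "s \<in> Sgn" "i \<noteq> j"
    have r: "([(i,t),(j,s),(j,s)], Psi n - S2 n (i,t) (j,s)) \<in> Fam n" using h unfolding Fam_def by blast
    have Z: "\<forall>\<psi>\<in>Psi n - (Psi n - S2 n (i,t) (j,s)). x \<psi> = 0" using zero_step[OF n x r] z e by simp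
    have "[(i,t),(j,s),(i,-t)] \<in> Psi n" "[(i,t),(j,s),(i,-t)] \<in> S2 n (i,t) (j,s)"
      using h by (auto simp: Psi_def S2_def)
    then show False using final_contra[OF n x h] Z by auto
  next
    fix i j k t s p assume e: "\<psi>0 = [(i,t),(j,s),(k,p)]" and h: "i \<in> Idx n" "j \<in> Idx n" "k \<in> Idx n" "t \<in> Sgn" "s \<in> Sgn" "p \<in> Sgn" "i \<noteq> j" "j \<noteq> k"
    show False
    proof (cases "k = i")
      case ki: True
      show False
      proof (cases "p = t")
        case True
        have r: "([(i,t),(j,s),(i,t)], Psi n - S2 n (j,s) (i,t)) \<in> Fam n" using h unfolding Fam_def by blast
        have Z: "\<forall>\<psi>\<in>Psi n - (Psi n - S2 n (j,s) (i,t)). x \<psi> = 0" using zero_step[OF n x r] z e ki True by simp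
        have "[(j,s),(i,t),(j,-s)] \<in> Psi n" "[(j,s),(i,t),(j,-s)] \<in> S2 n (j,s) (i,t)"
          using h by (auto simp: Psi_def S2_def)
        then show False using final_contra[OF n x h(2) h(1) h(5) h(4)] h Z by auto
      next
        case False
        then have "p = -t" using h unfolding Sgn_def by auto
        then show False using final_contra[OF n x h(1,2,4,5,7)] z e ki by simp
      qed
    next
      case False
      have r: "([(i,t),(j,s),(k,p)], Psi n - S2 n (j,s) (k,p)) \<in> Fam n" using h False unfolding Fam_def by blast
      have Z: "\<forall>\<psi>\<in>Psi n - (Psi n - S2 n (j,s) (k,p)). x \<psi> = 0" using zero_step[OF n x r] z e by simp
      have "[(j,s),(k,p),(j,-s)] \<in> Psi n" "[(j,s),(k,p),(j,-s)] \<in> S2 n (j,s) (k,p)"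
        using h by (auto simp: Psi_def S2_def)
      then show False using final_contra[OF n x h(2) h(3) h(5) h(6) h(8)] Z by auto
    qed
  qed
qed


lemma frel_iff:
  assumes n: "n \<ge> 2" and y: "y \<in> Delta n" and r: "r \<in> Fam n"
  shows "frel r y \<le> M \<longleftrightarrow> (1 - y (fst r)) * (1 - (\<Sum>\<psi>\<in>snd r. y \<psi>)) \<le> M * (y (fst r) * (\<Sum>\<psi>\<in>snd r. y \<psi>))"
proof -
  have a: "y (fst r) > 0" using y Fam_props(1)[OF n r] by (auto simp: Delta_def)
  have b: "(\<Sum>\<psi>\<in>snd r. y \<psi>) > 0"
  proof (rule sum_pos)
    show "finite (snd r)" using Fam_props(2)[OF n r] finite_Psi finite_subset by blast
    show "snd r \<noteq> {}" using Fam_props(3)[OF n r] .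
    show "\<And>i. i \<in> snd r \<Longrightarrow> 0 < y i" using y Fam_props(2)[OF n r] by (auto simp: Delta_def)
  qed
  define A where "A = y (fst r)"
  define B where "B = (\<Sum>\<psi>\<in>snd r. y \<psi>)"
  have "frel r y = ((1 - A) * (1 - B)) / (A * B)" unfolding frel_def A_def B_def Let_def by simp
  moreover have "((1 - A) * (1 - B)) / (A * B) \<le> M \<longleftrightarrow> (1 - A) * (1 - B) \<le> M * (A * B)"
    using a b unfolding A_def B_def by (simp add: pos_divide_le_eq)
  ultimately show ?thesis unfolding A_def B_def by simp
qed

lemma FF_le_iff:
  assumes n: "n \<ge> 2"
  shows "FF n y \<le> M \<longleftrightarrow> (\<forall>r\<in>Fam n. frel r y \<le> M)"
  unfolding FF_def using finite_Fam[OF n] Fam_ne[OF n] by (simp add: Max_le_iff)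

lemma Delta_Gs:
  assumes n: "n \<ge> 2" and y: "y \<in> Delta n" and le: "FF n y \<le> M"
  shows "y \<in> Gs n M"
proof -
  have 1: "\<forall>\<psi>. y \<psi> \<in> (if \<psi> \<in> Psi n then {0..1} else {0})"
  proof
    fix \<psi>
    show "y \<psi> \<in> (if \<psi> \<in> Psi n then {0..1} else {0})"
    proof (cases "\<psi> \<in> Psi n")
      case True
      have "y \<psi> \<le> (\<Sum>\<psi>\<in>Psi n. y \<psi>)"
        using y True finite_Psi by (intro member_le_sum) (auto simp: Delta_def less_imp_le)
      then show ?thesis using y True by (auto simp: Delta_def less_imp_le)
    next
      case False then show ?thesis using y by (auto simp: Delta_def)
    qed
  qed
  show ?thesis using 1 y le FF_le_iff[OF n] frel_iff[OF n y] unfolding Gs_def by (auto simp: Delta_def)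
qed

lemma Gs_Delta:
  assumes n: "n \<ge> 2" and x: "x \<in> Gs n M"
  shows "x \<in> Delta n" "FF n x \<le> M"
proof -
  have "\<forall>\<psi>. \<psi> \<notin> Psi n \<longrightarrow> x \<psi> = 0"
  proof (intro allI impI)
    fix \<psi> assume "\<psi> \<notin> Psi n"
    moreover have "x \<psi> \<in> (if \<psi> \<in> Psi n then {0..1} else {0})" using x unfolding Gs_def by blast
    ultimately show "x \<psi> = 0" by simp
  qed
  then show xD: "x \<in> Delta n" using Gs_pos[OF n x] x unfolding Delta_def Gs_def by auto
  show "FF n x \<le> M" using x FF_le_iff[OF n] frel_iff[OF n xD] unfolding Gs_def by auto
qed

lemma cont_coord [continuous_intros]: "continuous_on S (\<lambda>x. x i::('b::topological_space))"
  by (rule continuous_on_subset[OF continuous_on_product_coordinates]) simp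

lemma closed_Gs: "closed (Gs n M)"
proof -
  have c1: "closed {x::word\<Rightarrow>real. x \<psi> \<in> (if \<psi> \<in> Psi n then {0..1} else {0})}" for \<psi>
  proof -
    have "{x::word\<Rightarrow>real. x \<psi> \<in> (if \<psi> \<in> Psi n then {0..1} else {0})} = (\<lambda>x. x \<psi>) -` (if \<psi> \<in> Psi n then {0..1} else {0})"
      by auto
    moreover have "closed ((\<lambda>x::word\<Rightarrow>real. x \<psi>) -` (if \<psi> \<in> Psi n then {0..1} else {0}))"
      by (rule continuous_closed_vimage) (use continuous_on_eq_continuous_at[of UNIV "\<lambda>x::word\<Rightarrow>real. x \<psi>"] in auto)
    ultimately show ?thesis by simp
  qed
  have c2: "closed {x::word\<Rightarrow>real. (\<Sum>\<psi>\<in>Psi n. x \<psi>) = 1}"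
    by (rule closed_Collect_eq) (intro continuous_intros)+
  have c3: "closed {x::word\<Rightarrow>real. (1 - x (fst r)) * (1 - (\<Sum>\<psi>\<in>snd r. x \<psi>)) \<le> M * (x (fst r) * (\<Sum>\<psi>\<in>snd r. x \<psi>))}" for r
    by (rule closed_Collect_le) (intro continuous_intros)+
  show ?thesis unfolding Gs_def using c1 c2 c3 by (intro closed_Int closed_INT) auto
qed

lemma compact_box: "compact (Pi\<^sub>E UNIV (\<lambda>\<psi>. if \<psi> \<in> Psi n then {0..1::real} else {0}))"
proof -
  have "compactin (product_topology (\<lambda>_. euclidean) UNIV) (Pi\<^sub>E UNIV (\<lambda>\<psi>. if \<psi> \<in> Psi n then {0..1::real} else {0}))"
    by (subst compactin_PiE) auto
  then show ?thesis by (simp add: euclidean_product_topology)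
qed

lemma compact_Gs: "compact (Gs n M)"
proof -
  have "Gs n M = Pi\<^sub>E UNIV (\<lambda>\<psi>. if \<psi> \<in> Psi n then {0..1::real} else {0}) \<inter> Gs n M"
    unfolding Gs_def by (auto simp: PiE_iff)
  then show ?thesis using compact_Int_closed[OF compact_box closed_Gs] by metis
qed


lemma frel_nonneg:
  assumes n: "n \<ge> 2" and y: "y \<in> Delta n" and r: "r \<in> Fam n"
  shows "frel r y \<ge> 0"
proof -
  have yn: "y \<psi> \<ge> 0" for \<psi>
  proof (cases "\<psi> \<in> Psi n")
    case True then show ?thesis using y unfolding Delta_def by (simp add: less_imp_le)
  next
    case False then show ?thesis using y unfolding Delta_def by simp
  qed
  have s1: "(\<Sum>\<psi>\<in>Psi n. y \<psi>) = 1" using y unfolding Delta_def by blast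
  have a0: "y (fst r) \<ge> 0" using yn by simp
  have a1: "y (fst r) \<le> 1" using member_le_sum[of "fst r" "Psi n" y] Fam_props(1)[OF n r] finite_Psi yn s1 by simp
  have b0: "(\<Sum>\<psi>\<in>snd r. y \<psi>) \<ge> 0" using yn by (simp add: sum_nonneg)
  have b1: "(\<Sum>\<psi>\<in>snd r. y \<psi>) \<le> 1" using sum_mono2[OF finite_Psi Fam_props(2)[OF n r], of y] yn s1 by simp
  show ?thesis unfolding frel_def Let_def using a0 a1 b0 b1 by simp
qed

theorem lemma5p2:
  fixes n :: nat
  assumes "n \<ge> 2"
  shows "\<exists>x\<in>Delta n. FF n x = (INF y\<in>Delta n. FF n y)"
proof -
  note n = assms
  define x0 where "x0 = (\<lambda>\<psi>. if \<psi> \<in> Psi n then 1 / real (card (Psi n)) else 0)"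
  have cp: "card (Psi n) > 0" using Psi_ne[OF n] finite_Psi card_gt_0_iff by blast
  have "x0 \<in> Delta n" unfolding Delta_def x0_def using cp by simp
  then have Dne: "Delta n \<noteq> {}" by blast
  have ff0: "FF n y \<ge> 0" if "y \<in> Delta n" for y
  proof -
    obtain r where r: "r \<in> Fam n" using Fam_ne[OF n] by blast
    have "frel r y \<le> FF n y" unfolding FF_def using r finite_Fam[OF n] by (intro Max_ge) auto
    then show ?thesis using frel_nonneg[OF n that r] by simp
  qed
  have bdd: "bdd_below (FF n ` Delta n)" using ff0 by (intro bdd_belowI[of _ 0]) auto
  define \<beta> where "\<beta> = (INF y\<in>Delta n. FF n y)"
  have small: "\<exists>y\<in>Delta n. FF n y < m" if "\<beta> < m" for m
    using cInf_lessD[of "FF n ` Delta n" m] that Dne unfolding \<beta>_def by auto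
  have "Gs n (\<beta>+1) \<inter> (\<Inter>M\<in>{M. \<beta> < M}. Gs n M) \<noteq> {}"
  proof (rule compact_imp_fip_image[OF compact_Gs closed_Gs])
    fix I' assume I': "finite I'" "I' \<subseteq> {M. \<beta> < M}"
    define m where "m = Min (insert (\<beta>+1) I')"
    have "m > \<beta>" unfolding m_def using I' by (subst Min_gr_iff) auto
    then obtain y where y: "y \<in> Delta n" "FF n y < m" using small by blast
    have "y \<in> Gs n M" if "M \<in> insert (\<beta>+1) I'" for M
    proof (rule Delta_Gs[OF n y(1)])
      have "m \<le> M" unfolding m_def using that I' by simp
      then show "FF n y \<le> M" using y by simp
    qed
    then show "Gs n (\<beta>+1) \<inter> (\<Inter>M\<in>I'. Gs n M) \<noteq> {}" by blast
  qed
  then obtain x where x1: "x \<in> Gs n (\<beta>+1)" and x2: "\<And>M. \<beta> < M \<Longrightarrow> x \<in> Gs n M" by blast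
  have xD: "x \<in> Delta n" using Gs_Delta(1)[OF n x1] .
  have "FF n x \<le> \<beta>"
  proof (rule field_le_epsilon)
    fix e :: real assume "0 < e"
    then show "FF n x \<le> \<beta> + e" using Gs_Delta(2)[OF n x2[of "\<beta> + e"]] by simp
  qed
  moreover have "\<beta> \<le> FF n x" unfolding \<beta>_def using bdd xD by (rule cINF_lower)
  ultimately show ?thesis using xD unfolding \<beta>_def by (intro bexI[of _ x]) auto
qed

end
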